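(* Let $G$ be a connected graph on $N\ge2$ vertices with minimum vertex degree $D_{\min}\ge1$, and let $\rho$ be $|\psi_G\rangle$ subjected to independent local $Z$-noise with probability $p\in[0,1/2]$ on each qubit. If $$2(1-p)^{D_{\min}+1}\le (1-p)^{D_{\min}}+p^{D_{\min}},$$ then $\rho$ cannot be purified to $|\psi_G\rangle$ by any protocol.
   Context: Graph state $|\psi_G\rangle$: common $+1$ eigenstate of $K_i=X_i\prod_{\{i,j\}\in E_G}Z_j$ (equivalently $|+\rangle^{\otimes N}$ followed by controlled-phase gates along every edge). Local $Z$-noise with probability $p$: $\rho=\sum_{j\in\{0,1\}^N}p^{|j|}(1-p)^{N-|j|}Z_j|\psi_G\rangle\langle\psi_G|Z_j$. Purification: each qubit held by a distinct party holding that qubit from arbitrarily many copies; using SLOCC they must produce $|\psi_G\rangle$ with fidelity arbitrarily close to 1. Known input: a two-qubit Bell-diagonal state with weight $\lambda_{00}$ on the target Bell state is purifiable iff $\lambda_{00}>1/2$. *)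

theory Defs
  imports Complex_Main "HOL-Library.FuncSet"
begin

definition simple_graph_on :: "nat \<Rightarrow> (nat \<Rightarrow> nat \<Rightarrow> bool) \<Rightarrow> bool" where
  "simple_graph_on N E \<longleftrightarrow>
     (\<forall>i j. E i j \<longrightarrow> i < N \<and> j < N) \<and> (\<forall>i j. E i j \<longrightarrow> E j i) \<and> (\<forall>i. \<not> E i i)"

definition graph_connected :: "nat \<Rightarrow> (nat \<Rightarrow> nat \<Rightarrow> bool) \<Rightarrow> bool" where
  "graph_connected N E \<longleftrightarrow> (\<forall>i<N. \<forall>j<N. E\<^sup>*\<^sup>* i j)"

definition degree :: "nat \<Rightarrow> (nat \<Rightarrow> nat \<Rightarrow> bool) \<Rightarrow> nat \<Rightarrow> nat" where
  "degree N E i = card {j. j < N \<and> E i j}"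

definition min_degree :: "nat \<Rightarrow> (nat \<Rightarrow> nat \<Rightarrow> bool) \<Rightarrow> nat" where
  "min_degree N E = Min (degree N E ` {0..<N})"

text \<open>Computational-basis configurations of N qubits (qubit i in state x i).\<close>
definition cfgs :: "nat \<Rightarrow> (nat \<Rightarrow> bool) set" where
  "cfgs N = PiE {0..<N} (\<lambda>_. UNIV)"

definition hweight :: "nat \<Rightarrow> (nat \<Rightarrow> bool) \<Rightarrow> nat" where
  "hweight N s = card {i \<in> {0..<N}. s i}"

text \<open>Amplitudes of |psi_G> = (prod of CZ over edges) |+>^N :
  <x|psi_G> = 2^(-N/2) (-1)^(number of edges {i,j} with x_i = x_j = 1).\<close>
definition graph_amp :: "nat \<Rightarrow> (nat \<Rightarrow> nat \<Rightarrow> bool) \<Rightarrow> (nat \<Rightarrow> bool) \<Rightarrow> real" where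
  "graph_amp N E x =
     (-1) ^ card {(i, j). i < j \<and> j < N \<and> E i j \<and> x i \<and> x j} / sqrt (2 ^ N)"

text \<open>Diagonal action of Z_s = prod_{i: s i} Z_i on basis state x.\<close>
definition zsign :: "nat \<Rightarrow> (nat \<Rightarrow> bool) \<Rightarrow> (nat \<Rightarrow> bool) \<Rightarrow> real" where
  "zsign N s x = (-1) ^ card {i \<in> {0..<N}. s i \<and> x i}"

text \<open>Matrix entries <x| rho |y> of
  rho = sum_s p^|s| (1-p)^(N-|s|) Z_s |psi_G><psi_G| Z_s.\<close>
definition noisy_rho ::
  "nat \<Rightarrow> (nat \<Rightarrow> nat \<Rightarrow> bool) \<Rightarrow> real \<Rightarrow> (nat \<Rightarrow> bool) \<Rightarrow> (nat \<Rightarrow> bool) \<Rightarrow> real" where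
  "noisy_rho N E p x y =
     (\<Sum>s\<in>cfgs N. p ^ hweight N s * (1 - p) ^ (N - hweight N s) *
        (zsign N s x * graph_amp N E x) * (zsign N s y * graph_amp N E y))"

text \<open>With m copies, party i holds m qubits; its local basis states are numbers X i < 2^m,
  bit k of X i being the state of its qubit from copy k.\<close>
definition mcfgs :: "nat \<Rightarrow> nat \<Rightarrow> (nat \<Rightarrow> nat) set" where
  "mcfgs N m = PiE {0..<N} (\<lambda>_. {0..<2 ^ m})"

definition copy_slice :: "(nat \<Rightarrow> nat) \<Rightarrow> nat \<Rightarrow> (nat \<Rightarrow> bool)" where
  "copy_slice X k = (\<lambda>i. bit (X i) k)"

definition rho_copies ::
  "nat \<Rightarrow> (nat \<Rightarrow> nat \<Rightarrow> bool) \<Rightarrow> real \<Rightarrow> nat \<Rightarrow> (nat \<Rightarrow> nat) \<Rightarrow> (nat \<Rightarrow> nat) \<Rightarrow> real" where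
  "rho_copies N E p m X Y = (\<Prod>k<m. noisy_rho N E p (copy_slice X k) (copy_slice Y k))"

text \<open>A local operator of party i maps its 2^m-dimensional space to one qubit:
  entry A i b a (output bit b, input basis index a < 2^m). The global Kraus operator is
  the tensor product over parties.\<close>
definition kraus_prod ::
  "nat \<Rightarrow> (nat \<Rightarrow> bool \<Rightarrow> nat \<Rightarrow> complex) \<Rightarrow> (nat \<Rightarrow> bool) \<Rightarrow> (nat \<Rightarrow> nat) \<Rightarrow> complex" where
  "kraus_prod N A x X = (\<Prod>i<N. A i (x i) (X i))"

text \<open>Unnormalised output of an SLOCC (separable) operation with product Kraus operators
  K_r = A r 0 \<otimes> ... \<otimes> A r (N-1), r < R, applied to rho^{\<otimes> m}:
  sigma = sum_r K_r rho^{\<otimes> m} K_r^dagger.\<close>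
definition slocc_out ::
  "nat \<Rightarrow> (nat \<Rightarrow> nat \<Rightarrow> bool) \<Rightarrow> real \<Rightarrow> nat \<Rightarrow> nat \<Rightarrow>
   (nat \<Rightarrow> nat \<Rightarrow> bool \<Rightarrow> nat \<Rightarrow> complex) \<Rightarrow> (nat \<Rightarrow> bool) \<Rightarrow> (nat \<Rightarrow> bool) \<Rightarrow> complex" where
  "slocc_out N E p m R A x y =
     (\<Sum>r<R. \<Sum>X\<in>mcfgs N m. \<Sum>Y\<in>mcfgs N m.
        kraus_prod N (A r) x X * complex_of_real (rho_copies N E p m X Y) *
        cnj (kraus_prod N (A r) y Y))"

definition out_trace ::
  "nat \<Rightarrow> (nat \<Rightarrow> nat \<Rightarrow> bool) \<Rightarrow> real \<Rightarrow> nat \<Rightarrow> nat \<Rightarrow>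
   (nat \<Rightarrow> nat \<Rightarrow> bool \<Rightarrow> nat \<Rightarrow> complex) \<Rightarrow> complex" where
  "out_trace N E p m R A = (\<Sum>x\<in>cfgs N. slocc_out N E p m R A x x)"

text \<open><psi_G| sigma |psi_G> (amplitudes of psi_G are real).\<close>
definition out_overlap ::
  "nat \<Rightarrow> (nat \<Rightarrow> nat \<Rightarrow> bool) \<Rightarrow> real \<Rightarrow> nat \<Rightarrow> nat \<Rightarrow>
   (nat \<Rightarrow> nat \<Rightarrow> bool \<Rightarrow> nat \<Rightarrow> complex) \<Rightarrow> complex" where
  "out_overlap N E p m R A =
     (\<Sum>x\<in>cfgs N. \<Sum>y\<in>cfgs N.
        complex_of_real (graph_amp N E x) * slocc_out N E p m R A x y *
        complex_of_real (graph_amp N E y))"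

definition out_fidelity ::
  "nat \<Rightarrow> (nat \<Rightarrow> nat \<Rightarrow> bool) \<Rightarrow> real \<Rightarrow> nat \<Rightarrow> nat \<Rightarrow>
   (nat \<Rightarrow> nat \<Rightarrow> bool \<Rightarrow> nat \<Rightarrow> complex) \<Rightarrow> real" where
  "out_fidelity N E p m R A = Re (out_overlap N E p m R A / out_trace N E p m R A)"

definition purifiable :: "nat \<Rightarrow> (nat \<Rightarrow> nat \<Rightarrow> bool) \<Rightarrow> real \<Rightarrow> bool" where
  "purifiable N E p \<longleftrightarrow>
     (\<forall>\<epsilon>>0. \<exists>m R A. out_trace N E p m R A \<noteq> 0 \<and> out_fidelity N E p m R A \<ge> 1 - \<epsilon>)"

end

theory Submission
  imports Defs "HOL-Analysis.Analysis"
begin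

definition prodvec :: "nat \<Rightarrow> ((nat \<Rightarrow> 'v) \<Rightarrow> complex) \<Rightarrow> bool" where
  "prodvec a u \<longleftrightarrow> (\<exists>f g. (\<forall>x z. g (x(a:=z)) = g x) \<and> (\<forall>x. u x = f (x a) * g x))"

inductive sep :: "nat \<Rightarrow> ((nat \<Rightarrow> 'v) \<Rightarrow> (nat \<Rightarrow> 'v) \<Rightarrow> complex) \<Rightarrow> bool" for a where
  sep0: "sep a (\<lambda>x y. 0)"
| sep1: "prodvec a u \<Longrightarrow> sep a (\<lambda>x y. u x * cnj (u y))"
| sepadd: "sep a K \<Longrightarrow> sep a L \<Longrightarrow> sep a (\<lambda>x y. K x y + L x y)"

lemma prodvec_mult: "prodvec a u \<Longrightarrow> prodvec a v \<Longrightarrow> prodvec a (\<lambda>x. u x * v x)"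
  unfolding prodvec_def
proof (elim exE conjE)
  fix f g f' g' assume g: "\<forall>x z. g (x(a := z)) = g x" and u: "\<forall>x. u x = f (x a) * g x"
    and g': "\<forall>x z. g' (x(a := z)) = g' x" and v: "\<forall>x. v x = f' (x a) * g' x"
  show "\<exists>f g. (\<forall>x z. g (x(a := z)) = g x) \<and> (\<forall>x. u x * v x = f (x a) * g x)"
    by (rule exI[of _ "\<lambda>b. f b * f' b"], rule exI[of _ "\<lambda>x. g x * g' x"])
       (simp add: g g' u v algebra_simps)
qed

lemma prodvec_scale: "prodvec a u \<Longrightarrow> prodvec a (\<lambda>x. c * u x)"
  unfolding prodvec_def
proof (elim exE conjE)
  fix f g assume g: "\<forall>x z. g (x(a := z)) = g x" and u: "\<forall>x. u x = f (x a) * g x"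
  show "\<exists>f g. (\<forall>x z. g (x(a := z)) = g x) \<and> (\<forall>x. c * u x = f (x a) * g x)"
    by (rule exI[of _ "\<lambda>b. c * f b"], rule exI[of _ g]) (simp add: g u)
qed

lemma prodvec_indep: "(\<And>x z. g (x(a:=z)) = g x) \<Longrightarrow> prodvec a (\<lambda>x. f (x a) * g x)"
  unfolding prodvec_def by blast

lemma sep_cong: "sep a K \<Longrightarrow> (\<And>x y. K x y = L x y) \<Longrightarrow> sep a L"
proof -
  assume "sep a K" "\<And>x y. K x y = L x y"
  then have "K = L" by (intro ext) auto
  with \<open>sep a K\<close> show ?thesis by simp
qed

lemma sep_rank1: "prodvec a u \<Longrightarrow> (\<And>x y. K x y = u x * cnj (u y)) \<Longrightarrow> sep a K"
  by (erule sep_cong[OF sep1]) simp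

lemma sep_scale: assumes "sep a K" "c \<ge> 0" shows "sep a (\<lambda>x y. complex_of_real c * K x y)"
  using assms(1)
proof induction
  case sep0 then show ?case by (simp add: sep.sep0)
next
  case (sep1 u)
  have "prodvec a (\<lambda>x. complex_of_real (sqrt c) * u x)" by (rule prodvec_scale[OF sep1])
  moreover have "complex_of_real c * (u x * cnj (u y)) =
      (complex_of_real (sqrt c) * u x) * cnj (complex_of_real (sqrt c) * u y)" for x y
  proof -
    have "complex_of_real c = complex_of_real (sqrt c) * complex_of_real (sqrt c)"
      using assms(2) by (simp flip: of_real_mult)
    then show ?thesis by (simp add: algebra_simps)
  qed
  ultimately show ?case by (rule sep_rank1)
next
  case (sepadd K L)
  then show ?case using sep.sepadd[OF sepadd(3,4)] by (simp add: algebra_simps)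
qed

lemma sep_mult: assumes "sep a K" "sep a L" shows "sep a (\<lambda>x y. K x y * L x y)"
  using assms(1)
proof induction
  case sep0 then show ?case by (simp add: sep.sep0)
next
  case (sep1 u)
  show ?case using assms(2)
  proof induction
    case sep0 then show ?case by (simp add: sep.sep0)
  next
    case (sep1 v)
    have "prodvec a (\<lambda>x. u x * v x)" by (rule prodvec_mult[OF \<open>prodvec a u\<close> sep1])
    then show ?case by (rule sep_rank1) (simp add: algebra_simps)
  next
    case (sepadd K L)
    then show ?case using sep.sepadd[OF sepadd(3,4)] by (simp add: algebra_simps)
  qed
next
  case (sepadd K1 K2)
  then show ?case using sep.sepadd[OF sepadd(3,4)] by (simp add: algebra_simps)
qed

lemma sep_one: "sep a (\<lambda>x y. 1)"
proof -
  have "prodvec a (\<lambda>x::nat \<Rightarrow> 'v. (\<lambda>_. 1) (x a) * (\<lambda>_. 1) x)" by (rule prodvec_indep) simp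
  then show ?thesis by (rule sep_rank1) simp
qed

lemma sep_sum: "finite I \<Longrightarrow> (\<And>i. i \<in> I \<Longrightarrow> sep a (F i)) \<Longrightarrow> sep a (\<lambda>x y. \<Sum>i\<in>I. F i x y)"
proof (induction I rule: finite_induct)
  case empty then show ?case by (simp add: sep0)
next
  case (insert i I)
  then show ?case using sepadd[of a "F i" "\<lambda>x y. \<Sum>i\<in>I. F i x y"] by simp
qed

lemma sep_prod: "finite I \<Longrightarrow> (\<And>i. i \<in> I \<Longrightarrow> sep a (F i)) \<Longrightarrow> sep a (\<lambda>x y. \<Prod>i\<in>I. F i x y)"
proof (induction I rule: finite_induct)
  case empty then show ?case by (simp add: sep_one)
next
  case (insert i I)
  then show ?case using sep_mult[of a "F i" "\<lambda>x y. \<Prod>i\<in>I. F i x y"] by simp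
qed

lemma sep_slice: assumes "sep a (K :: (nat \<Rightarrow> bool) \<Rightarrow> (nat \<Rightarrow> bool) \<Rightarrow> complex)"
  shows "sep a (\<lambda>X Y. K (copy_slice X k) (copy_slice Y k))"
  using assms
proof induction
  case sep0 then show ?case by (simp add: sep.sep0)
next
  case (sep1 u)
  then obtain f g where g: "\<forall>x z. g (x(a := z)) = g x" and u: "\<forall>x. u x = f (x a) * g x"
    unfolding prodvec_def by blast
  have sl: "copy_slice (X(a := n)) k = (copy_slice X k)(a := bit n k)" for X :: "nat \<Rightarrow> nat" and n
    by (auto simp: copy_slice_def)
  have "prodvec a (\<lambda>X. f (bit (X a) k) * g (copy_slice X k))"
    by (rule prodvec_indep) (simp add: sl g)
  then show ?case by (rule sep_rank1) (simp add: u copy_slice_def)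
next
  case (sepadd K L)
  then show ?case using sep.sepadd[OF sepadd(3,4)] by simp
qed

lemma mcfgs_bij:
  assumes "a < N"
  shows "bij_betw (\<lambda>(n, X). X(a := n)) ({0..<(2::nat)^m} \<times> {X \<in> mcfgs N m. X a = 0}) (mcfgs N m)"
proof (rule bij_betwI[where g = "\<lambda>X. (X a, X(a := 0))"])
  show "(\<lambda>(n, X). X(a := n)) \<in> {0..<2 ^ m} \<times> {X \<in> mcfgs N m. X a = 0} \<rightarrow> mcfgs N m"
  proof (clarsimp)
    fix n :: nat and X assume "n < 2^m" "X \<in> mcfgs N m"
    then show "X(a := n) \<in> mcfgs N m"
      unfolding mcfgs_def using assms PiE_fun_upd[of n "\<lambda>_. {0..<2^m}" a X "{0..<N}"]
      by (simp add: insert_absorb)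
  qed
  show "(\<lambda>X. (X a, X(a := 0))) \<in> mcfgs N m \<rightarrow> {0..<2 ^ m} \<times> {X \<in> mcfgs N m. X a = 0}"
  proof (rule Pi_I)
    fix X assume X: "X \<in> mcfgs N m"
    then have A: "X a < 2 ^ m" unfolding mcfgs_def using assms by (auto dest: PiE_mem)
    have B: "X(a := 0) \<in> mcfgs N m"
      using X unfolding mcfgs_def using assms PiE_fun_upd[of 0 "\<lambda>_. {0..<2^m}" a X "{0..<N}"]
      by (simp add: insert_absorb)
    from A B show "(X a, X(a := 0)) \<in> {0..<2 ^ m} \<times> {X \<in> mcfgs N m. X a = 0}" by simp
  qed
  show "(\<lambda>X. (X a, X(a := 0))) ((\<lambda>(n, X). X(a := n)) x) = x"
    if "x \<in> {0..<2 ^ m} \<times> {X \<in> mcfgs N m. X a = 0}" for x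
  proof -
    obtain n X where x1: "x = (n, X)" by (cases x)
    have x: "x = (n, X)" "X a = 0" using that x1 by auto
    have "(X(a := n))(a := 0) = X" using x(2) by (intro ext) auto
    then show ?thesis using x by simp
  qed
  show "(\<lambda>(n, X). X(a := n)) ((\<lambda>X. (X a, X(a := 0))) y) = y" if "y \<in> mcfgs N m" for y
    by simp
qed

lemma kraus_split:
  assumes "a < N"
  shows "kraus_prod N B x X = B a (x a) (X a) * (\<Prod>i\<in>{..<N} - {a}. B i (x i) (X i))"
  unfolding kraus_prod_def using assms by (subst prod.remove[of _ a]) auto

lemma kraus_factor:
  assumes a: "a < N" and g: "\<And>X z. g (X(a := z)) = g X"
  shows "prodvec a (\<lambda>x. \<Sum>X\<in>mcfgs N m. kraus_prod N B x X * (f (X a) * g X))"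
proof -
  define M0 where "M0 = {X \<in> mcfgs N m. X a = 0}"
  define h where "h x X = (\<Prod>i\<in>{..<N} - {a}. B i (x i) (X i)) * g X" for x X
  define F where "F b = (\<Sum>n\<in>{0..<(2::nat)^m}. B a b n * f n)" for b
  define G where "G x = (\<Sum>X\<in>M0. h x X)" for x
  have fin: "finite M0" unfolding M0_def mcfgs_def by (auto intro!: finite_PiE)
  have eq: "(\<Sum>X\<in>mcfgs N m. kraus_prod N B x X * (f (X a) * g X)) = F (x a) * G x" for x
  proof -
    have "(\<Sum>X\<in>mcfgs N m. kraus_prod N B x X * (f (X a) * g X)) =
        (\<Sum>nX\<in>{0..<(2::nat)^m} \<times> M0. (\<lambda>X. kraus_prod N B x X * (f (X a) * g X)) ((\<lambda>(n, X). X(a := n)) nX))"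
      using sum.reindex_bij_betw[OF mcfgs_bij[OF a, of m], symmetric] unfolding M0_def by blast
    also have "\<dots> = (\<Sum>nX\<in>{0..<(2::nat)^m} \<times> M0. B a (x a) (fst nX) * f (fst nX) * h x (snd nX))"
    proof (rule sum.cong[OF refl])
      fix nX assume "nX \<in> {0..<(2::nat)^m} \<times> M0"
      obtain n X where nX: "nX = (n, X)" by (cases nX)
      have pr: "(\<Prod>i\<in>{..<N} - {a}. B i (x i) ((X(a := n)) i)) = (\<Prod>i\<in>{..<N} - {a}. B i (x i) (X i))"
        by (rule prod.cong) auto
      have "kraus_prod N B x (X(a := n)) = B a (x a) n * (\<Prod>i\<in>{..<N} - {a}. B i (x i) (X i))"
        using kraus_split[OF a, of B x "X(a := n)"] pr by simp
      moreover have "g (X(a := n)) = g X" by (rule g)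
      ultimately show "(\<lambda>X. kraus_prod N B x X * (f (X a) * g X)) ((\<lambda>(n, X). X(a := n)) nX) =
          B a (x a) (fst nX) * f (fst nX) * h x (snd nX)"
        by (simp add: h_def nX)
    qed
    also have "\<dots> = F (x a) * G x"
      unfolding F_def G_def sum_product sum.cartesian_product
      by (rule sum.cong) (auto simp: algebra_simps)
    finally show ?thesis .
  qed
  have Gi: "G (x(a := b)) = G x" for x b
  proof -
    have "h (x(a := b)) X = h x X" for X
      unfolding h_def by (rule arg_cong2[where f = "(*)"], rule prod.cong) auto
    then show ?thesis unfolding G_def by simp
  qed
  have "prodvec a (\<lambda>x. F (x a) * G x)" by (rule prodvec_indep) (simp add: Gi)
  then show ?thesis by (simp add: eq)
qed


lemma sep_kraus:
  assumes a: "a < N" and K: "sep a (K :: (nat \<Rightarrow> nat) \<Rightarrow> (nat \<Rightarrow> nat) \<Rightarrow> complex)"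
  shows "sep a (\<lambda>x y. \<Sum>X\<in>mcfgs N m. \<Sum>Y\<in>mcfgs N m.
            kraus_prod N B x X * K X Y * cnj (kraus_prod N B y Y))"
  using K
proof induction
  case sep0 then show ?case by (simp add: sep.sep0)
next
  case (sep1 u)
  then obtain f g where g: "\<forall>x z. g (x(a := z)) = g x" and u: "\<forall>x. u x = f (x a) * g x"
    unfolding prodvec_def by blast
  define v where "v x = (\<Sum>X\<in>mcfgs N m. kraus_prod N B x X * (f (X a) * g X))" for x
  have pv: "prodvec a v" unfolding v_def by (rule kraus_factor[OF a]) (rule g[rule_format])
  show ?case
  proof (rule sep_rank1[OF pv])
    fix x y
    show "(\<Sum>X\<in>mcfgs N m. \<Sum>Y\<in>mcfgs N m. kraus_prod N B x X * (u X * cnj (u Y)) * cnj (kraus_prod N B y Y))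
        = v x * cnj (v y)"
      unfolding v_def sum_product cnj_sum by (rule sum.cong[OF refl], rule sum.cong[OF refl]) (simp add: u)
  qed
next
  case (sepadd K L)
  then show ?case using sep.sepadd[OF sepadd(3,4)] by (simp add: algebra_simps sum.distrib)
qed

definition edgeset :: "nat \<Rightarrow> (nat \<Rightarrow> nat \<Rightarrow> bool) \<Rightarrow> (nat \<Rightarrow> bool) \<Rightarrow> (nat \<times> nat) set" where
  "edgeset N E x = {(i, j). i < j \<and> j < N \<and> E i j \<and> x i \<and> x j}"

definition nbset :: "nat \<Rightarrow> (nat \<Rightarrow> nat \<Rightarrow> bool) \<Rightarrow> nat \<Rightarrow> (nat \<Rightarrow> bool) \<Rightarrow> nat set" where
  "nbset N E a x = {j. j < N \<and> E a j \<and> x j}"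

lemma graph_amp_edgeset: "graph_amp N E x = (-1) ^ card (edgeset N E x) / sqrt (2 ^ N)"
  unfolding graph_amp_def edgeset_def by simp

lemma finite_edgeset: "finite (edgeset N E x)"
proof -
  have "edgeset N E x \<subseteq> {..<N} \<times> {..<N}" unfolding edgeset_def by auto
  then show ?thesis by (rule finite_subset) auto
qed

lemma finite_nbset: "finite (nbset N E a x)"
  unfolding nbset_def by auto

lemma card_edgeset_split:
  assumes G: "simple_graph_on N E" and xa: "x a"
  shows "card (edgeset N E x) = card (edgeset N E (x(a := False))) + card (nbset N E a x)"
proof -
  have irr: "\<not> E i i" for i using G unfolding simple_graph_on_def by auto
  have sym: "E i j \<Longrightarrow> E j i" for i j using G unfolding simple_graph_on_def by auto
  have ed: "E i j \<Longrightarrow> i < N" for i j using G unfolding simple_graph_on_def by auto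
  define Ea where "Ea = (\<lambda>j. (min a j, max a j)) ` nbset N E a x"
  have un: "edgeset N E x = edgeset N E (x(a := False)) \<union> Ea"
  proof (rule set_eqI, clarify)
    fix i j
    show "((i, j) \<in> edgeset N E x) = ((i, j) \<in> edgeset N E (x(a := False)) \<union> Ea)"
    proof
      assume ij: "(i, j) \<in> edgeset N E x"
      then have ij': "i < j" "j < N" "E i j" "x i" "x j" unfolding edgeset_def by auto
      show "(i, j) \<in> edgeset N E (x(a := False)) \<union> Ea"
      proof (cases "i = a \<or> j = a")
        case False
        then show ?thesis using ij' unfolding edgeset_def by auto
      next
        case True
        then show ?thesis
        proof
          assume ia: "i = a"
          then have "j \<in> nbset N E a x" using ij' unfolding nbset_def by auto
          moreover have "(i, j) = (min a j, max a j)" using ia ij' by auto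
          ultimately show ?thesis unfolding Ea_def by blast
        next
          assume ja: "j = a"
          then have "i \<in> nbset N E a x" using ij' sym unfolding nbset_def by auto
          moreover have "(i, j) = (min a i, max a i)" using ja ij' by auto
          ultimately show ?thesis unfolding Ea_def by blast
        qed
      qed
    next
      assume "(i, j) \<in> edgeset N E (x(a := False)) \<union> Ea"
      then show "(i, j) \<in> edgeset N E x"
      proof
        assume "(i, j) \<in> edgeset N E (x(a := False))"
        then show ?thesis unfolding edgeset_def by (auto split: if_splits)
      next
        assume "(i, j) \<in> Ea"
        then obtain k where k: "k \<in> nbset N E a x" "(i, j) = (min a k, max a k)"
          unfolding Ea_def by blast
        have kk: "k < N" "E a k" "x k" "k \<noteq> a" using k(1) irr unfolding nbset_def by auto
        show ?thesis
        proof (cases "a < k")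
          case True
          then show ?thesis using k(2) kk xa unfolding edgeset_def by auto
        next
          case False
          then have "k < a" using kk by auto
          then show ?thesis using k(2) kk xa sym ed[of a k] unfolding edgeset_def by auto
        qed
      qed
    qed
  qed
  have disj: "edgeset N E (x(a := False)) \<inter> Ea = {}"
    unfolding edgeset_def Ea_def by (auto simp: min_def max_def split: if_splits)
  have inj: "inj_on (\<lambda>j. (min a j, max a j)) (nbset N E a x)"
  proof (rule inj_onI)
    fix j k assume "(min a j, max a j) = (min a k, max a k)"
    then have "min a j + max a j = min a k + max a k" by simp
    then show "j = k" by (simp add: min_def max_def split: if_splits)
  qed
  have fin1: "finite (edgeset N E (x(a := False)))" by (rule finite_edgeset)
  have fin2: "finite Ea" unfolding Ea_def using finite_nbset by auto
  have "card (edgeset N E x) = card (edgeset N E (x(a := False))) + card Ea"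
    unfolding un by (rule card_Un_disjoint[OF fin1 fin2 disj])
  also have "card Ea = card (nbset N E a x)" unfolding Ea_def by (rule card_image[OF inj])
  finally show ?thesis .
qed

definition sfun :: "nat \<Rightarrow> (nat \<Rightarrow> nat \<Rightarrow> bool) \<Rightarrow> nat \<Rightarrow> (nat \<Rightarrow> bool) \<Rightarrow> real" where
  "sfun N E a x = (-1) ^ card (nbset N E a x)"

lemma graph_amp_split:
  assumes G: "simple_graph_on N E"
  shows "graph_amp N E x = graph_amp N E (x(a := False)) * (if x a then sfun N E a x else 1)"
proof (cases "x a")
  case True
  show ?thesis using card_edgeset_split[of N E x a, OF G True] True
    by (simp add: graph_amp_edgeset sfun_def power_add)
next
  case False
  then have "x(a := False) = x" by (intro ext) auto
  then show ?thesis using False by simp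
qed


definition C0 :: "nat \<Rightarrow> nat \<Rightarrow> (nat \<Rightarrow> bool) set" where
  "C0 N a = {z \<in> cfgs N. \<not> z a}"

lemma finite_cfgs: "finite (cfgs N)"
  unfolding cfgs_def by (rule finite_PiE) auto

lemma card_cfgs: "card (cfgs N) = 2 ^ N"
  unfolding cfgs_def by (subst card_PiE) auto

lemma finite_C0: "finite (C0 N a)"
  unfolding C0_def using finite_cfgs by auto

lemma cfgs_upd: "x \<in> cfgs N \<Longrightarrow> a < N \<Longrightarrow> x(a := v) \<in> cfgs N"
  unfolding cfgs_def using PiE_fun_upd[of v "\<lambda>_. UNIV" a x "{0..<N}"] by (simp add: insert_absorb)

lemma sum_cfgs_split:
  assumes a: "a < N"
  shows "(\<Sum>x\<in>cfgs N. h x) = (\<Sum>z\<in>C0 N a. h z + h (z(a := True)))"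
proof -
  define C1 where "C1 = (\<lambda>z. z(a := True)) ` C0 N a"
  have un: "cfgs N = C0 N a \<union> C1"
  proof (rule set_eqI)
    fix x show "(x \<in> cfgs N) = (x \<in> C0 N a \<union> C1)"
    proof
      assume x: "x \<in> cfgs N"
      show "x \<in> C0 N a \<union> C1"
      proof (cases "x a")
        case True
        have "x(a := False) \<in> C0 N a" using cfgs_upd[OF x a] unfolding C0_def by auto
        moreover have "x = (x(a := False))(a := True)" using True by (intro ext) auto
        ultimately show ?thesis unfolding C1_def by blast
      next
        case False then show ?thesis using x unfolding C0_def by auto
      qed
    next
      assume "x \<in> C0 N a \<union> C1"
      then show "x \<in> cfgs N" unfolding C1_def C0_def using cfgs_upd[OF _ a] by auto
    qed
  qed
  have disj: "C0 N a \<inter> C1 = {}" unfolding C0_def C1_def by auto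
  have inj: "inj_on (\<lambda>z. z(a := True)) (C0 N a)"
  proof (rule inj_onI)
    fix z z' assume z: "z \<in> C0 N a" "z' \<in> C0 N a" "z(a := True) = z'(a := True)"
    show "z = z'"
    proof
      fix i
      have e: "(z(a := True)) i = (z'(a := True)) i" using z(3) by simp
      show "z i = z' i"
      proof (cases "i = a")
        case True then show ?thesis using z unfolding C0_def by auto
      next
        case False then show ?thesis using e by simp
      qed
    qed
  qed
  have fin1: "finite C1" unfolding C1_def using finite_C0 by auto
  have "(\<Sum>x\<in>cfgs N. h x) = (\<Sum>x\<in>C0 N a. h x) + (\<Sum>x\<in>C1. h x)"
    unfolding un by (rule sum.union_disjoint[OF finite_C0 fin1 disj])
  also have "(\<Sum>x\<in>C1. h x) = (\<Sum>z\<in>C0 N a. h (z(a := True)))"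
    unfolding C1_def by (rule sum.reindex[OF inj, unfolded comp_def])
  finally show ?thesis by (simp add: sum.distrib)
qed

lemma card_C0:
  assumes a: "a < N"
  shows "2 * card (C0 N a) = 2 ^ N"
proof -
  have "card (cfgs N) = (\<Sum>x\<in>cfgs N. 1::nat)" by simp
  also have "\<dots> = (\<Sum>z\<in>C0 N a. 2)" by (subst sum_cfgs_split[OF a]) simp
  finally show ?thesis by (simp add: card_cfgs)
qed

lemma sfun_pm: "sfun N E a x = 1 \<or> sfun N E a x = -1"
  unfolding sfun_def by (cases "even (card (nbset N E a x))") auto

lemma nbset_upd_a:
  assumes G: "simple_graph_on N E"
  shows "nbset N E a (x(a := v)) = nbset N E a x"
proof -
  have irr: "\<not> E i i" for i using G unfolding simple_graph_on_def by auto
  show ?thesis unfolding nbset_def using irr by auto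
qed

lemma sfun_flip:
  assumes G: "simple_graph_on N E" and b: "b < N" "E a b"
  shows "sfun N E a (x(b := \<not> x b)) = - sfun N E a x"
proof (cases "x b")
  case True
  have "nbset N E a x = insert b (nbset N E a (x(b := \<not> x b)))"
    using True b unfolding nbset_def by auto
  moreover have "b \<notin> nbset N E a (x(b := \<not> x b))" using True unfolding nbset_def by auto
  ultimately have "card (nbset N E a x) = Suc (card (nbset N E a (x(b := \<not> x b))))"
    using finite_nbset by simp
  then show ?thesis unfolding sfun_def by simp
next
  case False
  have "nbset N E a (x(b := \<not> x b)) = insert b (nbset N E a x)"
    using False b unfolding nbset_def by auto
  moreover have "b \<notin> nbset N E a x" using False unfolding nbset_def by auto
  ultimately have "card (nbset N E a (x(b := \<not> x b))) = Suc (card (nbset N E a x))"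
    using finite_nbset by simp
  then show ?thesis unfolding sfun_def by simp
qed

lemma card_Splus:
  assumes G: "simple_graph_on N E" and a: "a < N" and b: "b < N" "E a b"
  shows "4 * real (card {z \<in> C0 N a. sfun N E a z = 1}) = 2 ^ N"
    and "4 * real (card {z \<in> C0 N a. sfun N E a z = -1}) = 2 ^ N"
proof -
  have ab: "a \<noteq> b" using G b unfolding simple_graph_on_def by auto
  define Sp where "Sp = {z \<in> C0 N a. sfun N E a z = 1}"
  define Sm where "Sm = {z \<in> C0 N a. sfun N E a z = -1}"
  define fl where "fl z = z(b := \<not> z b)" for z :: "nat \<Rightarrow> bool"
  have flfl: "fl (fl z) = z" for z unfolding fl_def by (intro ext) auto
  have flC: "z \<in> C0 N a \<Longrightarrow> fl z \<in> C0 N a" for z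
    unfolding fl_def C0_def using cfgs_upd[OF _ b(1)] ab by auto
  have bij: "bij_betw fl Sp Sm"
  proof (rule bij_betwI[where g = fl])
    show "fl \<in> Sp \<rightarrow> Sm" unfolding Sp_def Sm_def using flC sfun_flip[OF G b] fl_def by auto
    show "fl \<in> Sm \<rightarrow> Sp" unfolding Sp_def Sm_def using flC sfun_flip[OF G b] fl_def by auto
  qed (simp_all add: flfl)
  have cSpm: "card Sp = card Sm" by (rule bij_betw_same_card[OF bij])
  have un: "C0 N a = Sp \<union> Sm" unfolding Sp_def Sm_def using sfun_pm by auto
  have dj: "Sp \<inter> Sm = {}" unfolding Sp_def Sm_def by auto
  have "card (C0 N a) = card Sp + card Sm"
    unfolding un by (rule card_Un_disjoint) (use finite_C0 dj in \<open>auto simp: Sp_def Sm_def\<close>)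
  with card_C0[OF a] cSpm have "4 * card Sp = 2 ^ N" "4 * card Sm = 2 ^ N" by linarith+
  then have "4 * real (card Sp) = 2 ^ N" "4 * real (card Sm) = 2 ^ N" by (metis of_nat_mult of_nat_numeral of_nat_power)+
  then show "4 * real (card {z \<in> C0 N a. sfun N E a z = 1}) = 2 ^ N"
    and "4 * real (card {z \<in> C0 N a. sfun N E a z = -1}) = 2 ^ N" unfolding Sp_def Sm_def by auto
qed

lemma parallelogram_cmod: "(cmod (P + M))\<^sup>2 + (cmod (P - M))\<^sup>2 = 2 * (cmod P)\<^sup>2 + 2 * (cmod M)\<^sup>2"
  unfolding cmod_power2 by (simp add: power2_eq_square algebra_simps)

lemma cs2: "(cmod (f0 * A + f1 * B))\<^sup>2 \<le> ((cmod f0)\<^sup>2 + (cmod f1)\<^sup>2) * ((cmod A)\<^sup>2 + (cmod B)\<^sup>2)"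
proof -
  have "cmod (f0 * A + f1 * B) \<le> cmod f0 * cmod A + cmod f1 * cmod B"
    by (metis norm_mult norm_triangle_ineq)
  then have "(cmod (f0 * A + f1 * B))\<^sup>2 \<le> (cmod f0 * cmod A + cmod f1 * cmod B)\<^sup>2"
    by (simp add: power_mono)
  also have "\<dots> \<le> ((cmod f0)\<^sup>2 + (cmod f1)\<^sup>2) * ((cmod A)\<^sup>2 + (cmod B)\<^sup>2)"
  proof -
    have "0 \<le> (cmod f0 * cmod B - cmod f1 * cmod A)\<^sup>2" by simp
    then show ?thesis by (simp add: power2_eq_square algebra_simps)
  qed
  finally show ?thesis .
qed

lemma half_bound:
  fixes c :: real and g :: "'a \<Rightarrow> complex" and psi :: "'a \<Rightarrow> real"
  assumes fin: "finite S" and psi: "\<And>z. z \<in> S \<Longrightarrow> \<bar>psi z\<bar> = c" and cS: "c\<^sup>2 * real (card S) = 1 / 4"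
  shows "(cmod (\<Sum>z\<in>S. complex_of_real (psi z) * g z))\<^sup>2 \<le> (\<Sum>z\<in>S. (cmod (g z))\<^sup>2) / 4"
proof -
  have c0: "c \<ge> 0" if "S \<noteq> {}" using psi that by force
  have "cmod (\<Sum>z\<in>S. complex_of_real (psi z) * g z) \<le> (\<Sum>z\<in>S. cmod (complex_of_real (psi z) * g z))"
    by (rule norm_sum)
  also have "\<dots> = (\<Sum>z\<in>S. c * cmod (g z))"
    by (rule sum.cong) (simp_all add: norm_mult psi)
  also have "\<dots> = c * (\<Sum>z\<in>S. cmod (g z))" by (simp add: sum_distrib_left)
  finally have n1: "cmod (\<Sum>z\<in>S. complex_of_real (psi z) * g z) \<le> c * (\<Sum>z\<in>S. cmod (g z))" .
  show ?thesis
  proof (cases "S = {}")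
    case True then show ?thesis by simp
  next
    case False
    have "(cmod (\<Sum>z\<in>S. complex_of_real (psi z) * g z))\<^sup>2 \<le> (c * (\<Sum>z\<in>S. cmod (g z)))\<^sup>2"
      by (rule power_mono[OF n1]) simp
    also have "\<dots> = c\<^sup>2 * (\<Sum>z\<in>S. cmod (g z))\<^sup>2" by (simp add: power_mult_distrib)
    also have "\<dots> \<le> c\<^sup>2 * ((\<Sum>z\<in>S. (cmod (g z))\<^sup>2) * real (card S))"
      by (rule mult_left_mono[OF sum_squared_le_sum_of_squares]) simp
    also have "\<dots> = (\<Sum>z\<in>S. (cmod (g z))\<^sup>2) * (c\<^sup>2 * real (card S))" by simp
    also have "\<dots> = (\<Sum>z\<in>S. (cmod (g z))\<^sup>2) / 4" using cS by simp
    finally show ?thesis .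
  qed
qed

lemma graph_amp_abs: "\<bar>graph_amp N E x\<bar> = 1 / sqrt (2 ^ N)"
  unfolding graph_amp_def by (simp add: abs_div)

lemma P2:
  assumes G: "simple_graph_on N E" and a: "a < N" and b: "b < N" "E a b"
    and u: "prodvec a u"
  shows "(cmod (\<Sum>x\<in>cfgs N. complex_of_real (graph_amp N E x) * u x))\<^sup>2
           \<le> (\<Sum>x\<in>cfgs N. (cmod (u x))\<^sup>2) / 2"
proof -
  obtain f g where g: "\<forall>x z. g (x(a := z)) = g x" and uf: "\<forall>x. u x = f (x a) * g x"
    using u unfolding prodvec_def by blast
  define psi where "psi = graph_amp N E"
  define s where "s = sfun N E a"
  define Sp where "Sp = {z \<in> C0 N a. s z = 1}"
  define Sm where "Sm = {z \<in> C0 N a. s z = -1}"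
  have psiT: "psi (z(a := True)) = psi z * s z" if "z \<in> C0 N a" for z
  proof -
    have za: "\<not> z a" using that unfolding C0_def by auto
    have "(z(a := True))(a := False) = z" using za by (intro ext) auto
    moreover have "sfun N E a (z(a := True)) = sfun N E a z"
      unfolding sfun_def using nbset_upd_a[OF G] by simp
    ultimately show ?thesis unfolding psi_def s_def using graph_amp_split[OF G, of "z(a := True)" a] by simp
  qed
  define A where "A = (\<Sum>z\<in>C0 N a. complex_of_real (psi z) * g z)"
  define B where "B = (\<Sum>z\<in>C0 N a. complex_of_real (psi z * s z) * g z)"
  define G2 where "G2 = (\<Sum>z\<in>C0 N a. (cmod (g z))\<^sup>2)"
  have sum1: "(\<Sum>x\<in>cfgs N. complex_of_real (graph_amp N E x) * u x) = f False * A + f True * B"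
  proof -
    have "(\<Sum>x\<in>cfgs N. complex_of_real (graph_amp N E x) * u x)
        = (\<Sum>z\<in>C0 N a. complex_of_real (psi z) * u z + complex_of_real (psi (z(a := True))) * u (z(a := True)))"
      unfolding psi_def by (rule sum_cfgs_split[OF a])
    also have "\<dots> = (\<Sum>z\<in>C0 N a. f False * (complex_of_real (psi z) * g z) + f True * (complex_of_real (psi z * s z) * g z))"
    proof (rule sum.cong[OF refl])
      fix z assume z: "z \<in> C0 N a"
      then have za: "\<not> z a" unfolding C0_def by auto
      show "complex_of_real (psi z) * u z + complex_of_real (psi (z(a := True))) * u (z(a := True)) =
          f False * (complex_of_real (psi z) * g z) + f True * (complex_of_real (psi z * s z) * g z)"
        using za psiT[OF z] uf g by simp
    qed
    also have "\<dots> = f False * A + f True * B"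
      unfolding A_def B_def by (simp add: sum.distrib sum_distrib_left)
    finally show ?thesis .
  qed
  have sum2: "(\<Sum>x\<in>cfgs N. (cmod (u x))\<^sup>2) = ((cmod (f False))\<^sup>2 + (cmod (f True))\<^sup>2) * G2"
  proof -
    have "(\<Sum>x\<in>cfgs N. (cmod (u x))\<^sup>2) = (\<Sum>z\<in>C0 N a. (cmod (u z))\<^sup>2 + (cmod (u (z(a := True))))\<^sup>2)"
      by (rule sum_cfgs_split[OF a])
    also have "\<dots> = (\<Sum>z\<in>C0 N a. ((cmod (f False))\<^sup>2 + (cmod (f True))\<^sup>2) * (cmod (g z))\<^sup>2)"
    proof (rule sum.cong[OF refl])
      fix z assume z: "z \<in> C0 N a"
      then have za: "\<not> z a" unfolding C0_def by auto
      show "(cmod (u z))\<^sup>2 + (cmod (u (z(a := True))))\<^sup>2 = ((cmod (f False))\<^sup>2 + (cmod (f True))\<^sup>2) * (cmod (g z))\<^sup>2"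
        using za uf g by (simp add: norm_mult power_mult_distrib algebra_simps)
    qed
    also have "\<dots> = ((cmod (f False))\<^sup>2 + (cmod (f True))\<^sup>2) * G2"
      unfolding G2_def by (simp add: sum_distrib_left)
    finally show ?thesis .
  qed
  define P where "P = (\<Sum>z\<in>Sp. complex_of_real (psi z) * g z)"
  define M where "M = (\<Sum>z\<in>Sm. complex_of_real (psi z) * g z)"
  have un: "C0 N a = Sp \<union> Sm" unfolding Sp_def Sm_def s_def using sfun_pm by auto
  have dj: "Sp \<inter> Sm = {}" unfolding Sp_def Sm_def by auto
  have finp: "finite Sp" "finite Sm" unfolding Sp_def Sm_def using finite_C0 by auto
  have AP: "A = P + M" unfolding A_def P_def M_def un by (rule sum.union_disjoint[OF finp dj])
  have "B = (\<Sum>z\<in>Sp. complex_of_real (psi z * s z) * g z) + (\<Sum>z\<in>Sm. complex_of_real (psi z * s z) * g z)"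
    unfolding B_def un by (rule sum.union_disjoint[OF finp dj])
  also have "(\<Sum>z\<in>Sp. complex_of_real (psi z * s z) * g z) = P"
    unfolding P_def by (rule sum.cong) (auto simp: Sp_def)
  also have "(\<Sum>z\<in>Sm. complex_of_real (psi z * s z) * g z) = - M"
    unfolding M_def by (simp add: Sm_def flip: sum_negf)
  finally have BP: "B = P - M" by simp
  have G2s: "G2 = (\<Sum>z\<in>Sp. (cmod (g z))\<^sup>2) + (\<Sum>z\<in>Sm. (cmod (g z))\<^sup>2)"
    unfolding G2_def un by (rule sum.union_disjoint[OF finp dj])
  have cc: "(1 / sqrt (2 ^ N))\<^sup>2 * real (card Sp) = 1 / 4" "(1 / sqrt (2 ^ N))\<^sup>2 * real (card Sm) = 1 / 4"
    using card_Splus[OF G a b] unfolding Sp_def Sm_def s_def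
    by (simp_all add: power_divide field_simps)
  have Pb: "(cmod P)\<^sup>2 \<le> (\<Sum>z\<in>Sp. (cmod (g z))\<^sup>2) / 4"
    unfolding P_def by (rule half_bound[OF finp(1) _ cc(1)]) (simp add: psi_def graph_amp_abs)
  have Mb: "(cmod M)\<^sup>2 \<le> (\<Sum>z\<in>Sm. (cmod (g z))\<^sup>2) / 4"
    unfolding M_def by (rule half_bound[OF finp(2) _ cc(2)]) (simp add: psi_def graph_amp_abs)
  have AB: "(cmod A)\<^sup>2 + (cmod B)\<^sup>2 \<le> G2 / 2"
    unfolding AP BP parallelogram_cmod G2s using Pb Mb by simp
  have "(cmod (\<Sum>x\<in>cfgs N. complex_of_real (graph_amp N E x) * u x))\<^sup>2
      \<le> ((cmod (f False))\<^sup>2 + (cmod (f True))\<^sup>2) * ((cmod A)\<^sup>2 + (cmod B)\<^sup>2)"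
    unfolding sum1 by (rule cs2)
  also have "\<dots> \<le> ((cmod (f False))\<^sup>2 + (cmod (f True))\<^sup>2) * (G2 / 2)"
    by (rule mult_left_mono[OF AB]) simp
  also have "\<dots> = (\<Sum>x\<in>cfgs N. (cmod (u x))\<^sup>2) / 2" unfolding sum2 by simp
  finally show ?thesis .
qed

lemma prodvec_mk: "(\<And>x z. g (x(a:=z)) = g x) \<Longrightarrow> (\<And>x. u x = f (x a) * g x) \<Longrightarrow> prodvec a u"
  unfolding prodvec_def by blast

lemma sep_r1s: "prodvec a u \<Longrightarrow> c \<ge> 0 \<Longrightarrow> sep a (\<lambda>x y. complex_of_real c * (u x * cnj (u y)))"
  by (rule sep_scale[OF sep1])

lemma block:
  fixes X0 X1 :: "(nat \<Rightarrow> bool) \<Rightarrow> real"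
  assumes X0: "\<And>x z. X0 (x(a := z)) = X0 x" and X1: "\<And>x z. X1 (x(a := z)) = X1 x"
    and r: "0 \<le> r" "r \<le> 1" and W: "W1 \<le> W0" "r * W0 \<le> W1" "0 \<le> W1"
  shows "sep a (\<lambda>x y. complex_of_real ((if x a = y a then 1 else r) *
      (W0 * (if x a then X1 x else X0 x) * (if y a then X1 y else X0 y) +
       W1 * (if x a then X0 x else X1 x) * (if y a then X0 y else X1 y))))"
proof -
  define ca where "ca = r * (W0 + W1) / 4"
  define cb where "cb = r * (W0 - W1) / 4"
  define cc where "cc = (1 - r) * W0"
  define cd where "cd = W1 - r * W0"
  have cpos: "ca \<ge> 0" "cb \<ge> 0" "cc \<ge> 0" "cd \<ge> 0"
    unfolding ca_def cb_def cc_def cd_def using r W by auto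
  define up where "up x = complex_of_real (X0 x + X1 x)" for x
  define um where "um x = (if x a then -1 else 1) * complex_of_real (X0 x - X1 x)" for x
  define zp where "zp x = (if x a then \<i> else 1) * (complex_of_real (X0 x) - \<i> * complex_of_real (X1 x))" for x
  define zm where "zm x = (if x a then - \<i> else 1) * (complex_of_real (X0 x) + \<i> * complex_of_real (X1 x))" for x
  define d1 where "d1 x = (if x a then 0 else 1) * complex_of_real (X0 x)" for x
  define d1' where "d1' x = (if x a then 1 else 0) * complex_of_real (X1 x)" for x
  define d2 where "d2 x = (if x a then 0 else 1) * complex_of_real (X1 x)" for x
  define d2' where "d2' x = (if x a then 1 else 0) * complex_of_real (X0 x)" for x
  have pv_up: "prodvec a up"
    by (rule prodvec_mk[where f = "\<lambda>_. 1" and g = "\<lambda>x. complex_of_real (X0 x + X1 x)"]) (simp_all add: X0 X1 up_def)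
  have pv_um: "prodvec a um"
    by (rule prodvec_mk[where f = "\<lambda>b. if b then -1 else 1" and g = "\<lambda>x. complex_of_real (X0 x - X1 x)"]) (simp_all add: X0 X1 um_def)
  have pv_zp: "prodvec a zp"
    by (rule prodvec_mk[where f = "\<lambda>b. if b then \<i> else 1" and g = "\<lambda>x. complex_of_real (X0 x) - \<i> * complex_of_real (X1 x)"]) (simp_all add: X0 X1 zp_def)
  have pv_zm: "prodvec a zm"
    by (rule prodvec_mk[where f = "\<lambda>b. if b then -\<i> else 1" and g = "\<lambda>x. complex_of_real (X0 x) + \<i> * complex_of_real (X1 x)"]) (simp_all add: X0 X1 zm_def)
  have pv_d1: "prodvec a d1"
    by (rule prodvec_mk[where f = "\<lambda>b. if b then 0 else 1" and g = "\<lambda>x. complex_of_real (X0 x)"]) (simp_all add: X0 X1 d1_def)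
  have pv_d1': "prodvec a d1'"
    by (rule prodvec_mk[where f = "\<lambda>b. if b then 1 else 0" and g = "\<lambda>x. complex_of_real (X1 x)"]) (simp_all add: X0 X1 d1'_def)
  have pv_d2: "prodvec a d2"
    by (rule prodvec_mk[where f = "\<lambda>b. if b then 0 else 1" and g = "\<lambda>x. complex_of_real (X1 x)"]) (simp_all add: X0 X1 d2_def)
  have pv_d2': "prodvec a d2'"
    by (rule prodvec_mk[where f = "\<lambda>b. if b then 1 else 0" and g = "\<lambda>x. complex_of_real (X0 x)"]) (simp_all add: X0 X1 d2'_def)
  note pv = pv_up pv_um pv_zp pv_zm pv_d1 pv_d1' pv_d2 pv_d2'
  define K where "K x y =
      (complex_of_real ca * (up x * cnj (up y)) + complex_of_real ca * (um x * cnj (um y))) +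
      (complex_of_real cb * (zp x * cnj (zp y)) + complex_of_real cb * (zm x * cnj (zm y))) +
      ((complex_of_real cc * (d1 x * cnj (d1 y)) + complex_of_real cc * (d1' x * cnj (d1' y))) +
      (complex_of_real cd * (d2 x * cnj (d2 y)) + complex_of_real cd * (d2' x * cnj (d2' y))))" for x y
  have sK: "sep a K"
    unfolding K_def
    by (intro sepadd sep_r1s pv cpos)
  show ?thesis
  proof (rule sep_cong[OF sK])
    fix x y
    show "K x y = complex_of_real ((if x a = y a then 1 else r) *
      (W0 * (if x a then X1 x else X0 x) * (if y a then X1 y else X0 y) +
       W1 * (if x a then X0 x else X1 x) * (if y a then X0 y else X1 y)))"
      unfolding K_def up_def um_def zp_def zm_def d1_def d1'_def d2_def d2'_def ca_def cb_def cc_def cd_def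
      by (cases "x a"; cases "y a"; simp add: algebra_simps; simp add: field_simps; simp add: algebra_simps)
  qed
qed

definition Tk :: "real \<Rightarrow> (nat \<Rightarrow> bool) \<Rightarrow> (nat \<Rightarrow> bool) \<Rightarrow> nat \<Rightarrow> real" where
  "Tk p x y i = (if x i = y i then 1 else 1 - 2 * p)"

definition chi :: "nat set \<Rightarrow> (nat \<Rightarrow> bool) \<Rightarrow> (nat \<Rightarrow> bool) \<Rightarrow> real" where
  "chi A s x = (\<Prod>i\<in>A. if s i \<and> x i then -1 else 1)"

definition Wt :: "real \<Rightarrow> nat set \<Rightarrow> (nat \<Rightarrow> bool) \<Rightarrow> real" where
  "Wt p A s = (\<Prod>i\<in>A. if s i then p else 1 - p)"

definition flipA :: "nat set \<Rightarrow> (nat \<Rightarrow> bool) \<Rightarrow> (nat \<Rightarrow> bool)" where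
  "flipA A s = (\<lambda>i. if i \<in> A then \<not> s i else undefined)"

lemma prod_if_card:
  assumes "finite A"
  shows "(\<Prod>i\<in>A. if P i then c else d) = c ^ card {i \<in> A. P i} * d ^ card {i \<in> A. \<not> P i}"
proof -
  have "(\<Prod>i\<in>A. if P i then c else d) = (\<Prod>i\<in>A \<inter> {x. P x}. c) * (\<Prod>i\<in>A \<inter> - {x. P x}. d)"
    by (rule prod.If_cases[OF assms])
  also have "A \<inter> {x. P x} = {i \<in> A. P i}" by auto
  also have "A \<inter> - {x. P x} = {i \<in> A. \<not> P i}" by auto
  finally show ?thesis by simp
qed

lemma card_split:
  assumes "finite A"
  shows "card {i \<in> A. P i} + card {i \<in> A. \<not> P i} = card A"
proof -
  have "A = {i \<in> A. P i} \<union> {i \<in> A. \<not> P i}" by auto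
  then have "card A = card ({i \<in> A. P i} \<union> {i \<in> A. \<not> P i})" by simp
  also have "\<dots> = card {i \<in> A. P i} + card {i \<in> A. \<not> P i}"
    by (rule card_Un_disjoint) (use assms in auto)
  finally show ?thesis by simp
qed

lemma expand_prod:
  assumes fin: "finite A"
  shows "(\<Prod>i\<in>A. Tk p x y i) = (\<Sum>s\<in>PiE A (\<lambda>_. UNIV). Wt p A s * chi A s x * chi A s y)"
proof -
  define tau where "tau i v = (if v then p else 1 - p) * (if v \<and> x i then -1 else 1) * (if v \<and> y i then -1 else (1::real))" for i v
  have "(\<Prod>i\<in>A. Tk p x y i) = (\<Prod>i\<in>A. \<Sum>v\<in>UNIV. tau i v)"
    by (rule prod.cong[OF refl]) (auto simp: tau_def Tk_def UNIV_bool)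
  also have "\<dots> = (\<Sum>s\<in>PiE A (\<lambda>_. UNIV). \<Prod>i\<in>A. tau i (s i))"
    by (rule prod_sum_PiE) (use fin in auto)
  also have "\<dots> = (\<Sum>s\<in>PiE A (\<lambda>_. UNIV). Wt p A s * chi A s x * chi A s y)"
    unfolding tau_def Wt_def chi_def by (simp add: prod.distrib)
  finally show ?thesis .
qed

lemma noisy_closed:
  "noisy_rho N E p x y = (\<Prod>i\<in>{0..<N}. Tk p x y i) * graph_amp N E x * graph_amp N E y"
proof -
  have w: "p ^ hweight N s * (1 - p) ^ (N - hweight N s) = Wt p {0..<N} s" for s
  proof -
    have "card {i \<in> {0..<N}. \<not> s i} = N - hweight N s"
      using card_split[of "{0..<N}" s] unfolding hweight_def by simp
    then show ?thesis unfolding Wt_def by (simp add: prod_if_card hweight_def)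
  qed
  have z: "zsign N s x = chi {0..<N} s x" for s x
    unfolding zsign_def chi_def by (simp add: prod_if_card)
  have "noisy_rho N E p x y = (\<Sum>s\<in>cfgs N. Wt p {0..<N} s * chi {0..<N} s x * chi {0..<N} s y) * graph_amp N E x * graph_amp N E y"
    unfolding noisy_rho_def w z sum_distrib_right by (rule sum.cong) (simp_all add: algebra_simps)
  also have "\<dots> = (\<Prod>i\<in>{0..<N}. Tk p x y i) * graph_amp N E x * graph_amp N E y"
    unfolding cfgs_def by (simp add: expand_prod)
  finally show ?thesis .
qed


lemma wineq:
  fixes p :: real
  assumes p: "0 \<le> p" "p \<le> 1 / 2" and k: "k \<le> D" and hyp: "(1 - 2 * p) * (1 - p) ^ D \<le> p ^ D"
  shows "(1 - 2 * p) * (p ^ k * (1 - p) ^ (D - k)) \<le> p ^ (D - k) * (1 - p) ^ k"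
proof (cases "2 * k \<le> D")
  case True
  define e where "e = D - 2 * k"
  have De: "D = e + 2 * k" and Dk: "D - k = e + k" using True unfolding e_def by auto
  have q0: "0 < 1 - p" using p by auto
  have pq: "p ^ (2 * k) \<le> (1 - p) ^ (2 * k)" by (rule power_mono) (use p in auto)
  have "(1 - 2 * p) * (1 - p) ^ e * (1 - p) ^ (2 * k) \<le> p ^ e * p ^ (2 * k)"
    using hyp unfolding De by (simp add: power_add algebra_simps)
  also have "\<dots> \<le> p ^ e * (1 - p) ^ (2 * k)"
    by (rule mult_left_mono[OF pq]) (use p in simp)
  finally have "(1 - 2 * p) * (1 - p) ^ e \<le> p ^ e"
    using q0 by (simp add: mult_le_cancel_right)
  then have "(p ^ k * (1 - p) ^ k) * ((1 - 2 * p) * (1 - p) ^ e) \<le> (p ^ k * (1 - p) ^ k) * p ^ e"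
    by (rule mult_left_mono) (use p in simp)
  then show ?thesis unfolding Dk by (simp add: power_add algebra_simps)
next
  case False
  define e where "e = 2 * k - D"
  have ke: "k = (D - k) + e" using False k unfolding e_def by auto
  define j where "j = D - k"
  have r1: "(1 - 2 * p) * p ^ e \<le> (1 - p) ^ e"
  proof -
    have "(1 - 2 * p) * p ^ e \<le> 1 * p ^ e" by (rule mult_right_mono) (use p in auto)
    also have "\<dots> \<le> (1 - p) ^ e" by simp (rule power_mono, use p in auto)
    finally show ?thesis .
  qed
  have "(p ^ j * (1 - p) ^ j) * ((1 - 2 * p) * p ^ e) \<le> (p ^ j * (1 - p) ^ j) * (1 - p) ^ e"
    by (rule mult_left_mono[OF r1]) (use p in simp)
  moreover have "k = j + e" using ke unfolding j_def by simp
  ultimately show ?thesis unfolding j_def[symmetric] by (simp add: power_add algebra_simps)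
qed

lemma flipA_PiE: "s \<in> PiE A (\<lambda>_. UNIV) \<Longrightarrow> flipA A s \<in> PiE A (\<lambda>_. UNIV)"
  unfolding flipA_def by (auto simp: PiE_iff extensional_def)

lemma flipA_flipA: "s \<in> PiE A (\<lambda>_. UNIV) \<Longrightarrow> flipA A (flipA A s) = s"
  unfolding flipA_def by (intro ext) (auto simp: PiE_iff extensional_def)

lemma sum_flip:
  assumes "finite A"
  shows "(\<Sum>s\<in>PiE A (\<lambda>_. UNIV). h (flipA A s)) = (\<Sum>s\<in>PiE A (\<lambda>_. UNIV). (h s :: real))"
proof -
  have bij: "bij_betw (flipA A) (PiE A (\<lambda>_. UNIV)) (PiE A (\<lambda>_. UNIV))"
    by (rule bij_betwI[where g = "flipA A"]) (auto simp: flipA_PiE flipA_flipA)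
  show ?thesis by (rule sum.reindex_bij_betw[OF bij])
qed

lemma chi_flip:
  "chi A (flipA A s) x = chi A s x * (\<Prod>i\<in>A. if x i then -1 else 1)"
  unfolding chi_def prod.distrib[symmetric] flipA_def by (rule prod.cong) auto

lemma Wt_flip: "Wt p A (flipA A s) = (\<Prod>i\<in>A. if s i then 1 - p else p)"
  unfolding Wt_def flipA_def by (rule prod.cong) auto

lemma chi_indep: "a \<notin> A \<Longrightarrow> chi A s (x(a := z)) = chi A s x"
  unfolding chi_def by (rule prod.cong) auto

lemma P1:
  assumes G: "simple_graph_on N E" and a: "a < N" and p: "0 \<le> p" "p \<le> 1 / 2"
    and hyp: "(1 - 2 * p) * (1 - p) ^ card {j. j < N \<and> E a j} \<le> p ^ card {j. j < N \<and> E a j}"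
  shows "sep a (\<lambda>x y. complex_of_real (noisy_rho N E p x y))"
proof -
  define Nb where "Nb = {j. j < N \<and> E a j}"
  define D where "D = card Nb"
  define R where "R = {0..<N} - insert a Nb"
  define r where "r = 1 - 2 * p"
  define S where "S x = (if x a then sfun N E a x else 1)" for x
  define PS where "PS = PiE Nb (\<lambda>_. UNIV :: bool set)"
  have finNb: "finite Nb" unfolding Nb_def by auto
  have aNb: "a \<notin> Nb" using G unfolding Nb_def simple_graph_on_def by auto
  have NbN: "Nb \<subseteq> {0..<N}" unfolding Nb_def by auto
  have sfun_prod: "sfun N E a x = (\<Prod>i\<in>Nb. if x i then -1 else 1)" for x
  proof -
    have "{i \<in> Nb. x i} = nbset N E a x" unfolding Nb_def nbset_def by auto
    then show ?thesis unfolding sfun_def by (simp add: prod_if_card[OF finNb])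
  qed
  have sfsq: "sfun N E a x * sfun N E a x = 1" for x
    using sfun_pm[of N E a x] by auto
  have chiflip: "chi Nb (flipA Nb s) x = chi Nb s x * sfun N E a x" for s x
    unfolding chi_flip sfun_prod ..
  define V where "V s x = chi Nb s x * S x" for s x
  have V1: "V s x = (if x a then chi Nb (flipA Nb s) x else chi Nb s x)" for s x
    unfolding V_def S_def chiflip by simp
  define Bf where "Bf s x y = Tk p x y a * (Wt p Nb s * V s x * V s y)" for s x y
  have core: "Tk p x y a * (\<Prod>i\<in>Nb. Tk p x y i) * S x * S y
      = (1 / 2) * (\<Sum>s\<in>PS. Bf s x y + Bf (flipA Nb s) x y)" for x y
  proof -
    have e1: "Tk p x y a * (\<Prod>i\<in>Nb. Tk p x y i) * S x * S y = (\<Sum>s\<in>PS. Bf s x y)"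
      unfolding expand_prod[OF finNb] PS_def Bf_def V_def sum_distrib_left sum_distrib_right
      by (rule sum.cong) (simp_all add: algebra_simps)
    have e2: "(\<Sum>s\<in>PS. Bf (flipA Nb s) x y) = (\<Sum>s\<in>PS. Bf s x y)"
      unfolding PS_def by (rule sum_flip[OF finNb])
    show ?thesis unfolding e1 sum.distrib e2 by simp
  qed
  have r01: "0 \<le> r" "r \<le> 1" unfolding r_def using p by auto
  have Tk_eq: "Tk p x y a = (if x a = y a then 1 else r)" for x y unfolding Tk_def r_def by simp
  have Xi: "chi Nb s (x(a := z)) = chi Nb s x" for s x z by (rule chi_indep[OF aNb])
  have pair: "sep a (\<lambda>x y. complex_of_real (Bf s x y + Bf (flipA Nb s) x y))" if s: "s \<in> PS" for s
  proof -
    define k where "k = card {i \<in> Nb. s i}"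
    have kD: "k \<le> D" unfolding k_def D_def by (rule card_mono[OF finNb]) auto
    have ck: "card {i \<in> Nb. \<not> s i} = D - k"
      using card_split[OF finNb, of s] unfolding k_def D_def by simp
    have Ws: "Wt p Nb s = p ^ k * (1 - p) ^ (D - k)"
      unfolding Wt_def prod_if_card[OF finNb] k_def[symmetric] ck ..
    have Wf: "Wt p Nb (flipA Nb s) = p ^ (D - k) * (1 - p) ^ k"
      unfolding Wt_flip prod_if_card[OF finNb] k_def[symmetric] ck by simp
    have hypD: "(1 - 2 * p) * (1 - p) ^ D \<le> p ^ D" using hyp unfolding D_def Nb_def .
    have i1: "r * Wt p Nb s \<le> Wt p Nb (flipA Nb s)"
      unfolding Ws Wf r_def by (rule wineq[OF p kD hypD])
    have i2: "r * Wt p Nb (flipA Nb s) \<le> Wt p Nb s"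
    proof -
      have "(1 - 2 * p) * (p ^ (D - k) * (1 - p) ^ (D - (D - k))) \<le> p ^ (D - (D - k)) * (1 - p) ^ (D - k)"
        by (rule wineq[OF p _ hypD]) simp
      then show ?thesis unfolding Ws Wf r_def using kD by (simp add: algebra_simps)
    qed
    have Wp: "0 \<le> Wt p Nb s" "0 \<le> Wt p Nb (flipA Nb s)"
      unfolding Ws Wf using p by auto
    have ss: "flipA Nb (flipA Nb s) = s" using s unfolding PS_def by (rule flipA_flipA)
    show ?thesis
    proof (cases "Wt p Nb (flipA Nb s) \<le> Wt p Nb s")
      case True
      have "sep a (\<lambda>x y. complex_of_real ((if x a = y a then 1 else r) *
        (Wt p Nb s * (if x a then chi Nb (flipA Nb s) x else chi Nb s x) * (if y a then chi Nb (flipA Nb s) y else chi Nb s y) +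
         Wt p Nb (flipA Nb s) * (if x a then chi Nb s x else chi Nb (flipA Nb s) x) * (if y a then chi Nb s y else chi Nb (flipA Nb s) y))))"
        by (rule block[OF Xi Xi r01 True i1 Wp(2)])
      then show ?thesis by (rule sep_cong) (simp add: Bf_def V1 ss Tk_eq algebra_simps)
    next
      case False
      have "sep a (\<lambda>x y. complex_of_real ((if x a = y a then 1 else r) *
        (Wt p Nb (flipA Nb s) * (if x a then chi Nb s x else chi Nb (flipA Nb s) x) * (if y a then chi Nb s y else chi Nb (flipA Nb s) y) +
         Wt p Nb s * (if x a then chi Nb (flipA Nb s) x else chi Nb s x) * (if y a then chi Nb (flipA Nb s) y else chi Nb s y))))"
        by (rule block[OF Xi Xi r01 _ i2 Wp(1)]) (use False in simp)
      then show ?thesis by (rule sep_cong) (simp add: Bf_def V1 ss Tk_eq algebra_simps)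
    qed
  qed
  have score: "sep a (\<lambda>x y. complex_of_real (Tk p x y a * (\<Prod>i\<in>Nb. Tk p x y i) * S x * S y))"
  proof -
    have "sep a (\<lambda>x y. complex_of_real (1 / 2) * (\<Sum>s\<in>PS. complex_of_real (Bf s x y + Bf (flipA Nb s) x y)))"
    proof (rule sep_scale)
      have fPS: "finite PS" unfolding PS_def by (rule finite_PiE) (simp_all add: finNb)
      show "sep a (\<lambda>x y. \<Sum>s\<in>PS. complex_of_real (Bf s x y + Bf (flipA Nb s) x y))"
        by (rule sep_sum[where F = "\<lambda>s x y. complex_of_real (Bf s x y + Bf (flipA Nb s) x y)", OF fPS pair])
    qed simp
    then show ?thesis by (rule sep_cong) (simp add: core)
  qed
  have sTk: "sep a (\<lambda>x y. complex_of_real (Tk p x y i))" if i: "i \<noteq> a" for i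
  proof -
    define sg where "sg x = complex_of_real (if x i then -1 else 1)" for x
    have pv1: "prodvec a (\<lambda>x::nat \<Rightarrow> bool. 1)"
      by (rule prodvec_mk[where f = "\<lambda>_. 1" and g = "\<lambda>_. 1"]) simp_all
    have pv2: "prodvec a sg"
      by (rule prodvec_mk[where f = "\<lambda>_. 1" and g = sg]) (simp_all add: sg_def i)
    have "sep a (\<lambda>x y. complex_of_real (1 - p) * (1 * cnj 1) + complex_of_real p * (sg x * cnj (sg y)))"
      by (intro sepadd sep_r1s pv1 pv2) (use p in auto)
    then show ?thesis by (rule sep_cong) (simp add: sg_def Tk_def)
  qed
  have sR: "sep a (\<lambda>x y. complex_of_real (\<Prod>i\<in>R. Tk p x y i))"
  proof -
    have "sep a (\<lambda>x y. \<Prod>i\<in>R. complex_of_real (Tk p x y i))"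
      by (rule sep_prod) (auto simp: R_def intro: sTk)
    then show ?thesis by (rule sep_cong) simp
  qed
  have sPsi: "sep a (\<lambda>x y. complex_of_real (graph_amp N E (x(a := False)) * graph_amp N E (y(a := False))))"
  proof -
    have "prodvec a (\<lambda>x. complex_of_real (graph_amp N E (x(a := False))))"
      by (rule prodvec_mk[where f = "\<lambda>_. 1" and g = "\<lambda>x. complex_of_real (graph_amp N E (x(a := False)))"]) simp_all
    then show ?thesis by (rule sep_rank1) simp
  qed
  have ident: "noisy_rho N E p x y = (\<Prod>i\<in>R. Tk p x y i) *
      (graph_amp N E (x(a := False)) * graph_amp N E (y(a := False))) *
      (Tk p x y a * (\<Prod>i\<in>Nb. Tk p x y i) * S x * S y)" for x y
  proof -
    have un: "{0..<N} = insert a Nb \<union> R" unfolding R_def using a NbN by auto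
    have "(\<Prod>i\<in>{0..<N}. Tk p x y i) = (\<Prod>i\<in>insert a Nb. Tk p x y i) * (\<Prod>i\<in>R. Tk p x y i)"
      unfolding un by (rule prod.union_disjoint) (auto simp: R_def finNb)
    also have "(\<Prod>i\<in>insert a Nb. Tk p x y i) = Tk p x y a * (\<Prod>i\<in>Nb. Tk p x y i)"
      by (rule prod.insert[OF finNb aNb])
    finally have pr: "(\<Prod>i\<in>{0..<N}. Tk p x y i) = Tk p x y a * (\<Prod>i\<in>Nb. Tk p x y i) * (\<Prod>i\<in>R. Tk p x y i)" .
    have gx: "graph_amp N E x = graph_amp N E (x(a := False)) * S x" for x
      unfolding S_def by (rule graph_amp_split[OF G])
    show ?thesis unfolding noisy_closed pr gx[of x] gx[of y] by (simp add: algebra_simps)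
  qed
  have "sep a (\<lambda>x y. complex_of_real (\<Prod>i\<in>R. Tk p x y i) *
      complex_of_real (graph_amp N E (x(a := False)) * graph_amp N E (y(a := False))) *
      complex_of_real (Tk p x y a * (\<Prod>i\<in>Nb. Tk p x y i) * S x * S y))"
    by (rule sep_mult[OF sep_mult[OF sR sPsi] score])
  then show ?thesis by (rule sep_cong) (simp only: ident of_real_mult)
qed

lemma good:
  assumes G: "simple_graph_on N E" and a: "a < N" and b: "b < N" "E a b"
    and S: "sep a (\<sigma> :: (nat \<Rightarrow> bool) \<Rightarrow> (nat \<Rightarrow> bool) \<Rightarrow> complex)"
  shows "\<exists>ov tv. (\<Sum>x\<in>cfgs N. \<Sum>y\<in>cfgs N. complex_of_real (graph_amp N E x) * \<sigma> x y * complex_of_real (graph_amp N E y))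
              = complex_of_real ov \<and> (\<Sum>x\<in>cfgs N. \<sigma> x x) = complex_of_real tv \<and> 0 \<le> tv \<and> ov \<le> tv / 2"
  using S
proof induction
  case sep0
  then show ?case by (intro exI[of _ 0]) simp
next
  case (sep1 u)
  define Sm where "Sm = (\<Sum>x\<in>cfgs N. complex_of_real (graph_amp N E x) * u x)"
  have ov: "(\<Sum>x\<in>cfgs N. \<Sum>y\<in>cfgs N. complex_of_real (graph_amp N E x) * (u x * cnj (u y)) * complex_of_real (graph_amp N E y))
      = complex_of_real ((cmod Sm)\<^sup>2)"
  proof -
    have "(\<Sum>x\<in>cfgs N. \<Sum>y\<in>cfgs N. complex_of_real (graph_amp N E x) * (u x * cnj (u y)) * complex_of_real (graph_amp N E y))
        = Sm * cnj Sm"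
      unfolding Sm_def sum_product cnj_sum by (rule sum.cong[OF refl], rule sum.cong[OF refl]) (simp add: algebra_simps)
    also have "\<dots> = complex_of_real ((cmod Sm)\<^sup>2)" using complex_norm_square[of Sm] by simp
    finally show ?thesis .
  qed
  have tr: "(\<Sum>x\<in>cfgs N. u x * cnj (u x)) = complex_of_real (\<Sum>x\<in>cfgs N. (cmod (u x))\<^sup>2)"
    unfolding of_real_sum by (rule sum.cong[OF refl]) (use complex_norm_square in simp)
  show ?case
    using P2[OF G a b sep1] ov tr unfolding Sm_def
    by (intro exI[of _ "(cmod Sm)\<^sup>2"] exI[of _ "\<Sum>x\<in>cfgs N. (cmod (u x))\<^sup>2"])
       (simp add: sum_nonneg Sm_def)
next
  case (sepadd K L)
  then obtain o1 t1 o2 t2 where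
    h1: "(\<Sum>x\<in>cfgs N. \<Sum>y\<in>cfgs N. complex_of_real (graph_amp N E x) * K x y * complex_of_real (graph_amp N E y)) = complex_of_real o1"
        "(\<Sum>x\<in>cfgs N. K x x) = complex_of_real t1" "0 \<le> t1" "o1 \<le> t1 / 2"
    and h2: "(\<Sum>x\<in>cfgs N. \<Sum>y\<in>cfgs N. complex_of_real (graph_amp N E x) * L x y * complex_of_real (graph_amp N E y)) = complex_of_real o2"
        "(\<Sum>x\<in>cfgs N. L x x) = complex_of_real t2" "0 \<le> t2" "o2 \<le> t2 / 2"
    by blast
  show ?case
    using h1 h2
    by (intro exI[of _ "o1 + o2"] exI[of _ "t1 + t2"])
       (simp add: algebra_simps sum.distrib)
qed

theorem mainTheorem3:
  fixes N :: nat and E :: "nat \<Rightarrow> nat \<Rightarrow> bool" and p :: real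
  assumes "simple_graph_on N E"
    and "graph_connected N E"
    and "N \<ge> 2"
    and "min_degree N E \<ge> 1"
    and "0 \<le> p" and "p \<le> 1 / 2"
    and "2 * (1 - p) ^ (min_degree N E + 1) \<le> (1 - p) ^ min_degree N E + p ^ min_degree N E"
  shows "\<not> purifiable N E p"
proof
  assume pur: "purifiable N E p"
  note G = assms(1)
  have ne: "Defs.degree N E ` {0..<N} \<noteq> {}" using assms(3) by auto
  have "min_degree N E \<in> Defs.degree N E ` {0..<N}"
    unfolding min_degree_def by (rule Min_in[OF _ ne]) simp
  then obtain a where a: "a < N" and Da: "Defs.degree N E a = min_degree N E" by auto
  define D where "D = min_degree N E"
  have cardD: "card {j. j < N \<and> E a j} = D" using Da unfolding D_def Defs.degree_def by simp
  then have "{j. j < N \<and> E a j} \<noteq> {}" using assms(4) unfolding D_def by (metis card.empty not_one_le_zero)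
  then obtain b where b: "b < N" "E a b" by auto
  have hyp: "(1 - 2 * p) * (1 - p) ^ card {j. j < N \<and> E a j} \<le> p ^ card {j. j < N \<and> E a j}"
    using assms(7) unfolding cardD D_def[symmetric] by (simp add: algebra_simps)
  have s1: "sep a (\<lambda>x y. complex_of_real (noisy_rho N E p x y))"
    by (rule P1[OF G a assms(5,6) hyp])
  obtain m R A where tr: "out_trace N E p m R A \<noteq> 0" and fid: "out_fidelity N E p m R A \<ge> 1 - 1/4"
    using pur unfolding purifiable_def by (meson divide_pos_pos zero_less_numeral zero_less_one)
  have s2: "sep a (\<lambda>X Y. complex_of_real (rho_copies N E p m X Y))"
  proof -
    have "sep a (\<lambda>X Y. \<Prod>k\<in>{..<m}. complex_of_real (noisy_rho N E p (copy_slice X k) (copy_slice Y k)))"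
      by (rule sep_prod) (auto intro: sep_slice[OF s1])
    then show ?thesis unfolding rho_copies_def by simp
  qed
  have s3: "sep a (\<lambda>x y. slocc_out N E p m R A x y)"
    unfolding slocc_out_def
    by (rule sep_sum) (auto intro: sep_kraus[OF a s2])
  obtain ov t where ot: "out_overlap N E p m R A = complex_of_real ov" "out_trace N E p m R A = complex_of_real t"
      "0 \<le> t" "ov \<le> t / 2"
    using good[OF G a b s3] unfolding out_overlap_def out_trace_def by blast
  have tpos: "t > 0" using ot tr by auto
  have "out_fidelity N E p m R A = ov / t"
    unfolding out_fidelity_def ot by (simp flip: of_real_divide)
  also have "\<dots> \<le> 1 / 2" using ot(4) tpos by (simp add: divide_simps)
  finally show False using fid by simp
qed

end
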